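(* Let $D$ be a $3$-dicritical digraph, let $T$ be a subdigraph of $D$ that is a tournament, and let $S$ be a set of vertices of $T$ inducing a transitive tournament in $T$, with acyclic ordering $v_1,\dots,v_s$. Then for every $x\in V(T)\setminus S$ there is an increasing sequence of intervals $(I_1,I_2,I_3,I_4)$ of $S$ with $I_1\cup I_2\cup I_3\cup I_4=S$ such that, in $T$, $x$ dominates $I_1\cup I_3$ and $x$ is dominated by $I_2\cup I_4$.
   Context: A $2$-dicolouring is a map to $\{1,2\}$ whose colour classes induce acyclic subdigraphs. $D$ is $3$-dicritical if $D$ has no $2$-dicolouring but every proper subdigraph has one. A tournament has exactly one arc between any two distinct vertices; it is transitive if acyclic, and then its acyclic ordering $v_1,\dots,v_s$ is the unique ordering with every arc $v_iv_j$ satisfying $i<j$. An interval of $S$ is a set $\{v_i,\dots,v_j\}$ for $i,j\in[s]$ (possibly empty). An interval $\{v_{i_0},\dots,v_{j_0}\}$ is smaller than $\{v_{i_1},\dots,v_{j_1}\}$ if $j_0<i_1$; by convention the empty interval is both smaller and greater than every interval. A sequence $P_1,\dots,P_t$ of intervals is increasing if $P_i$ is smaller than $P_j$ whenever $i<j$. A vertex $x$ dominates a set $Y$ (and $Y$ is dominated by $x$) if $xy$ is an arc for every $y\in Y$. *)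

theory Defs
  imports Main
begin

type_synonym 'a digraph = "'a set \<times> ('a \<times> 'a) set"

definition verts :: "'a digraph \<Rightarrow> 'a set" where "verts G = fst G"
definition arcs :: "'a digraph \<Rightarrow> ('a \<times> 'a) set" where "arcs G = snd G"

text \<open>Finite, loopless digraphs (digons allowed).\<close>
definition digraph :: "'a digraph \<Rightarrow> bool" where
  "digraph G \<longleftrightarrow> finite (verts G) \<and> arcs G \<subseteq> verts G \<times> verts G
     \<and> (\<forall>v. (v, v) \<notin> arcs G)"

definition subdigraph :: "'a digraph \<Rightarrow> 'a digraph \<Rightarrow> bool" where
  "subdigraph H G \<longleftrightarrow> verts H \<subseteq> verts G \<and> arcs H \<subseteq> arcs G
     \<and> arcs H \<subseteq> verts H \<times> verts H"

definition induced_arcs :: "'a digraph \<Rightarrow> 'a set \<Rightarrow> ('a \<times> 'a) set" where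
  "induced_arcs G X = arcs G \<inter> (X \<times> X)"

definition two_dicolouring :: "'a digraph \<Rightarrow> ('a \<Rightarrow> nat) \<Rightarrow> bool" where
  "two_dicolouring G c \<longleftrightarrow> c ` verts G \<subseteq> {1, 2}
     \<and> (\<forall>i\<in>{1::nat, 2}. acyclic (induced_arcs G {v \<in> verts G. c v = i}))"

definition two_dicolourable :: "'a digraph \<Rightarrow> bool" where
  "two_dicolourable G \<longleftrightarrow> (\<exists>c. two_dicolouring G c)"

definition three_dicritical :: "'a digraph \<Rightarrow> bool" where
  "three_dicritical D \<longleftrightarrow> digraph D \<and> \<not> two_dicolourable D
     \<and> (\<forall>H. subdigraph H D \<and> H \<noteq> D \<longrightarrow> two_dicolourable H)"

definition tournament :: "'a digraph \<Rightarrow> bool" where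
  "tournament T \<longleftrightarrow> arcs T \<subseteq> verts T \<times> verts T \<and> (\<forall>v. (v, v) \<notin> arcs T)
     \<and> (\<forall>u\<in>verts T. \<forall>v\<in>verts T. u \<noteq> v \<longrightarrow> ((u, v) \<in> arcs T \<longleftrightarrow> (v, u) \<notin> arcs T))"

definition induces_transitive :: "'a digraph \<Rightarrow> 'a set \<Rightarrow> bool" where
  "induces_transitive T S \<longleftrightarrow> S \<subseteq> verts T \<and> acyclic (induced_arcs T S)"

text \<open>vs = [v_1,...,v_s] (0-indexed) is the acyclic ordering of T[S].\<close>
definition acyclic_ordering :: "'a digraph \<Rightarrow> 'a set \<Rightarrow> 'a list \<Rightarrow> bool" where
  "acyclic_ordering T S vs \<longleftrightarrow> distinct vs \<and> set vs = S
     \<and> (\<forall>i<length vs. \<forall>j<length vs. (vs ! i, vs ! j) \<in> arcs T \<longrightarrow> i < j)"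

text \<open>{v_i, ..., v_j} for indices i, j (empty if i > j); the empty set is always an interval.\<close>
definition seg :: "'a list \<Rightarrow> nat \<Rightarrow> nat \<Rightarrow> 'a set" where
  "seg vs i j = {vs ! k | k. i \<le> k \<and> k \<le> j}"

definition interval :: "'a list \<Rightarrow> 'a set \<Rightarrow> bool" where
  "interval vs I \<longleftrightarrow> I = {} \<or> (\<exists>i<length vs. \<exists>j<length vs. I = seg vs i j)"

definition interval_smaller :: "'a list \<Rightarrow> 'a set \<Rightarrow> 'a set \<Rightarrow> bool" where
  "interval_smaller vs I J \<longleftrightarrow> I = {} \<or> J = {} \<or>
     (\<exists>i0<length vs. \<exists>j0<length vs. \<exists>i1<length vs. \<exists>j1<length vs.
        I = seg vs i0 j0 \<and> J = seg vs i1 j1 \<and> j0 < i1)"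

definition increasing :: "'a list \<Rightarrow> 'a set list \<Rightarrow> bool" where
  "increasing vs Ps \<longleftrightarrow> (\<forall>P\<in>set Ps. interval vs P)
     \<and> (\<forall>i<length Ps. \<forall>j<length Ps. i < j \<longrightarrow> interval_smaller vs (Ps ! i) (Ps ! j))"

definition dominates :: "('a \<times> 'a) set \<Rightarrow> 'a \<Rightarrow> 'a set \<Rightarrow> bool" where
  "dominates A x Y \<longleftrightarrow> (\<forall>y\<in>Y. (x, y) \<in> A)"

definition dominated_by :: "('a \<times> 'a) set \<Rightarrow> 'a \<Rightarrow> 'a set \<Rightarrow> bool" where
  "dominated_by A x Y \<longleftrightarrow> (\<forall>y\<in>Y. (y, x) \<in> A)"

end

theory Submission
  imports Defs
begin

lemma core:
  assumes crit: "three_dicritical D"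
    and A: "(a,d) \<in> arcs D" "(a,x) \<in> arcs D" "(x,d) \<in> arcs D"
      "(a,b) \<in> arcs D" "(b,d) \<in> arcs D" "(a,c) \<in> arcs D" "(c,d) \<in> arcs D"
      "(x,b) \<in> arcs D" "(b,c) \<in> arcs D" "(c,x) \<in> arcs D"
  shows False
proof -
  have dg: "digraph D" and nc: "\<not> two_dicolourable D"
    and cr: "\<And>H. subdigraph H D \<Longrightarrow> H \<noteq> D \<Longrightarrow> two_dicolourable H"
    using crit unfolding three_dicritical_def by auto
  have loop: "\<And>v. (v,v) \<notin> arcs D" and sub: "arcs D \<subseteq> verts D \<times> verts D"
    using dg unfolding digraph_def by auto
  have ne: "x \<noteq> d" "x \<noteq> a" "b \<noteq> d" "b \<noteq> a" "c \<noteq> d" "c \<noteq> a" "a \<noteq> d"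
    using A loop by metis+
  have V: "a \<in> verts D" "b \<in> verts D" "c \<in> verts D" "d \<in> verts D" "x \<in> verts D"
    using A sub by auto
  define H where "H = (verts D, arcs D - {(a,d)})"
  have vH: "verts H = verts D" and aH: "arcs H = arcs D - {(a,d)}"
    unfolding H_def verts_def arcs_def by auto
  have "subdigraph H D" unfolding subdigraph_def vH aH using sub by auto
  moreover have "H \<noteq> D" using aH A(1) by auto
  ultimately obtain \<phi> where col: "two_dicolouring H \<phi>"
    using cr two_dicolourable_def by blast
  define R where "R i = (arcs D - {(a,d)}) \<inter> ({v \<in> verts D. \<phi> v = i} \<times> {v \<in> verts D. \<phi> v = i})" for i
  have acR: "acyclic (R i)" if "i \<in> {1,2}" for i
    using col that unfolding two_dicolouring_def induced_arcs_def vH aH R_def by auto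
  have range: "\<phi> v \<in> {1,2}" if "v \<in> verts D" for v
    using col that unfolding two_dicolouring_def vH by auto
  have inR: "(u,v) \<in> R i" if "(u,v) \<in> arcs D" "(u,v) \<noteq> (a,d)" "\<phi> u = i" "\<phi> v = i" for u v i
    using that sub unfolding R_def by auto
  have "two_dicolouring D \<phi>"
    unfolding two_dicolouring_def
  proof (intro conjI ballI)
    show "\<phi> ` verts D \<subseteq> {1, 2}" using range by auto
  next
    fix i :: nat assume i: "i \<in> {1,2}"
    show "acyclic (induced_arcs D {v \<in> verts D. \<phi> v = i})"
    proof (rule ccontr)
      assume "\<not> acyclic (induced_arcs D {v \<in> verts D. \<phi> v = i})"
      then obtain p where p: "(p,p) \<in> (induced_arcs D {v \<in> verts D. \<phi> v = i})\<^sup>+"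
        unfolding acyclic_def by auto
      have "induced_arcs D {v \<in> verts D. \<phi> v = i} \<subseteq> insert (a,d) (R i)"
        unfolding induced_arcs_def R_def by auto
      then have "(p,p) \<in> (insert (a,d) (R i))\<^sup>+" using p trancl_mono by blast
      then have "(p,p) \<in> (R i)\<^sup>+ \<or> ((p,a) \<in> (R i)\<^sup>* \<and> (d,p) \<in> (R i)\<^sup>*)"
        by (simp add: trancl_insert)
      then have da: "(d,a) \<in> (R i)\<^sup>*" using acR[OF i] unfolding acyclic_def by auto
      then have "(d,a) \<in> (R i)\<^sup>+" using ne(7) rtranclD[OF da] by metis
      then obtain z z' where "(d,z) \<in> R i" "(z',a) \<in> R i"
        using tranclD tranclD2 by metis
      then have pa: "\<phi> a = i" and pd: "\<phi> d = i" unfolding R_def by auto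
      have cyc: "False" if "(a,u) \<in> R i" "(u,d) \<in> R i" for u
      proof -
        have "(d,u) \<in> (R i)\<^sup>+" using da that(1) by (meson rtrancl_into_trancl1)
        then have "(d,d) \<in> (R i)\<^sup>+" using that(2) by (meson trancl.trancl_into_trancl)
        then show False using acR[OF i] unfolding acyclic_def by auto
      qed
      have px: "\<phi> x \<noteq> i" using cyc[of x] inR A ne pa pd by auto
      have pb: "\<phi> b \<noteq> i" using cyc[of b] inR A ne pa pd by auto
      have pc: "\<phi> c \<noteq> i" using cyc[of c] inR A ne pa pd by auto
      define j where "j = \<phi> x"
      have j: "j \<in> {1,2}" using range V unfolding j_def by auto
      have "\<phi> b = j" "\<phi> c = j" using px pb pc range[of x] range[of b] range[of c] V i
        unfolding j_def by auto
      then have "(x,b) \<in> R j" "(b,c) \<in> R j" "(c,x) \<in> R j"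
        using inR A ne unfolding j_def by auto
      then have "(x,x) \<in> (R j)\<^sup>+" by (meson trancl.intros)
      then show False using acR[OF j] unfolding acyclic_def by auto
    qed
  qed
  then show False using nc unfolding two_dicolourable_def vH by auto
qed


lemma first_idx:
  assumes "m \<le> (n::nat)"
  shows "\<exists>t. m \<le> t \<and> t \<le> n \<and> (\<forall>k. m \<le> k \<and> k < t \<longrightarrow> \<not> P k) \<and> (t < n \<longrightarrow> P t)"
  using assms
proof (induction "n - m" arbitrary: m)
  case 0
  then show ?case by (intro exI[of _ n]) auto
next
  case (Suc e)
  show ?case
  proof (cases "P m")
    case True
    then show ?thesis using Suc by (intro exI[of _ m]) auto
  next
    case False
    have "e = n - Suc m" "Suc m \<le> n" using Suc by auto
    then obtain t where t: "Suc m \<le> t \<and> t \<le> n \<and> (\<forall>k. Suc m \<le> k \<and> k < t \<longrightarrow> \<not> P k) \<and> (t < n \<longrightarrow> P t)"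
      using Suc.hyps by blast
    have all: "\<forall>k. m \<le> k \<and> k < t \<longrightarrow> \<not> P k"
    proof (intro allI impI)
      fix k assume k: "m \<le> k \<and> k < t"
      show "\<not> P k"
      proof (cases "k = m")
        case True then show ?thesis using False by simp
      next
        case False then have "Suc m \<le> k" using k by simp
        then show ?thesis using t k by blast
      qed
    qed
    have "m \<le> t" using t by simp
    then show ?thesis using t all by blast
  qed
qed

definition blk :: "'a list \<Rightarrow> nat \<Rightarrow> nat \<Rightarrow> 'a set" where
  "blk vs l r = {vs ! k | k. l \<le> k \<and> k < r}"

lemma blk_img: "blk vs l r = (\<lambda>k. vs ! k) ` {l..<r}"
  unfolding blk_def by auto

lemma seg_img: "seg vs i j = (\<lambda>k. vs ! k) ` {i..j}"
  unfolding seg_def by auto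

lemma blk_seg: "l < r \<Longrightarrow> blk vs l r = seg vs l (r - 1)"
proof -
  assume "l < r"
  then have "r = Suc (r - 1)" by simp
  then have "{l..<r} = {l..r - 1}" by (metis atLeastLessThanSuc_atLeastAtMost)
  then show ?thesis unfolding blk_img seg_img by simp
qed

lemma blk_empty: "r \<le> l \<Longrightarrow> blk vs l r = {}"
  unfolding blk_def by auto

lemma blk_interval: "r \<le> length vs \<Longrightarrow> interval vs (blk vs l r)"
proof (cases "l < r")
  case True
  assume r: "r \<le> length vs"
  have "l < length vs" "r - 1 < length vs" using True r by auto
  then have "\<exists>i<length vs. \<exists>j<length vs. blk vs l r = seg vs i j"
    using blk_seg[OF True, of vs] by blast
  then show ?thesis unfolding interval_def by (rule disjI2)
next
  case False
  then show ?thesis unfolding interval_def using blk_empty[of r l vs] by simp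
qed

lemma blk_smaller:
  assumes "r1 \<le> l2" "r2 \<le> length vs"
  shows "interval_smaller vs (blk vs l1 r1) (blk vs l2 r2)"
proof (cases "l1 < r1 \<and> l2 < r2")
  case True
  have "l1 < length vs" "r1 - 1 < length vs" "l2 < length vs" "r2 - 1 < length vs" "r1 - 1 < l2"
    using True assms by auto
  moreover have "blk vs l1 r1 = seg vs l1 (r1 - 1)" "blk vs l2 r2 = seg vs l2 (r2 - 1)"
    using blk_seg[of l1 r1 vs] blk_seg[of l2 r2 vs] True by blast+
  ultimately have "\<exists>i0<length vs. \<exists>j0<length vs. \<exists>i1<length vs. \<exists>j1<length vs.
        blk vs l1 r1 = seg vs i0 j0 \<and> blk vs l2 r2 = seg vs i1 j1 \<and> j0 < i1"
    by blast
  then show ?thesis unfolding interval_smaller_def by blast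
next
  case False
  then show ?thesis unfolding interval_smaller_def using blk_empty by (metis not_less)
qed

lemma blk_union: "a \<le> b \<Longrightarrow> b \<le> c \<Longrightarrow> blk vs a b \<union> blk vs b c = blk vs a c"
  unfolding blk_img by (simp add: image_Un[symmetric] ivl_disj_un)

theorem lemma16:
  fixes D T :: "'a digraph" and S :: "'a set" and vs :: "'a list" and x :: 'a
  assumes "three_dicritical D"
    and "subdigraph T D" and "tournament T"
    and "induces_transitive T S"
    and "acyclic_ordering T S vs"
    and "x \<in> verts T - S"
  shows "\<exists>I1 I2 I3 I4. increasing vs [I1, I2, I3, I4]
           \<and> I1 \<union> I2 \<union> I3 \<union> I4 = S
           \<and> dominates (arcs T) x (I1 \<union> I3)
           \<and> dominated_by (arcs T) x (I2 \<union> I4)"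
proof -
  define n where "n = length vs"
  define p where "p k = ((x, vs ! k) \<in> arcs T)" for k
  have TD: "arcs T \<subseteq> arcs D" using assms(2) unfolding subdigraph_def by auto
  have ord: "distinct vs" "set vs = S"
    "\<And>i j. i < n \<Longrightarrow> j < n \<Longrightarrow> (vs ! i, vs ! j) \<in> arcs T \<Longrightarrow> i < j"
    using assms(5) unfolding acyclic_ordering_def n_def by auto
  have SV: "S \<subseteq> verts T" using assms(4) unfolding induces_transitive_def by auto
  have tour: "\<And>u v. u \<in> verts T \<Longrightarrow> v \<in> verts T \<Longrightarrow> u \<noteq> v \<Longrightarrow> (u,v) \<in> arcs T \<or> (v,u) \<in> arcs T"
    using assms(3) unfolding tournament_def by blast
  have vin: "vs ! k \<in> verts T" if "k < n" for k using that ord SV n_def by auto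
  have fwd: "(vs ! i, vs ! j) \<in> arcs D" if "i < j" "j < n" for i j
  proof -
    have "vs ! i \<noteq> vs ! j" using ord(1) that n_def nth_eq_iff_index_eq by fastforce
    then have "(vs ! i, vs ! j) \<in> arcs T \<or> (vs ! j, vs ! i) \<in> arcs T" using tour vin that by auto
    then show ?thesis using ord(3)[of j i] that TD by auto
  qed
  have xne: "x \<noteq> vs ! k" if "k < n" for k using assms(6) ord(2) that n_def by auto
  have neg: "(vs ! k, x) \<in> arcs T" if "k < n" "\<not> p k" for k
    using tour[of x "vs ! k"] xne[OF that(1)] vin[OF that(1)] assms(6) that(2) p_def by auto
  have pat: False if "i < j" "j < k" "k < l" "l < n" "\<not> p i" "p j" "\<not> p k" "p l" for i j k l
  proof -
    have lt: "i < n" "j < n" "k < n" using that by linarith+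
    have e1: "(vs ! i, x) \<in> arcs D" using neg[of i] lt that(5) TD by blast
    have e2: "(vs ! k, x) \<in> arcs D" using neg[of k] lt that(7) TD by blast
    have e3: "(x, vs ! j) \<in> arcs D" using that(6) TD unfolding p_def by blast
    have e4: "(x, vs ! l) \<in> arcs D" using that(8) TD unfolding p_def by blast
    have f1: "(vs ! i, vs ! l) \<in> arcs D" using fwd[of i l] that by linarith
    have f2: "(vs ! i, vs ! j) \<in> arcs D" using fwd[of i j] that by linarith
    have f3: "(vs ! j, vs ! l) \<in> arcs D" using fwd[of j l] that by linarith
    have f4: "(vs ! i, vs ! k) \<in> arcs D" using fwd[of i k] that by linarith
    have f5: "(vs ! k, vs ! l) \<in> arcs D" using fwd[of k l] that by linarith
    have f6: "(vs ! j, vs ! k) \<in> arcs D" using fwd[of j k] that by linarith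
    show False using core[OF assms(1) f1 e1 e4 f2 f3 f4 f5 e3 f6 e2] .
  qed
  obtain t1 where t1: "0 \<le> t1 \<and> t1 \<le> n \<and> (\<forall>k. 0 \<le> k \<and> k < t1 \<longrightarrow> \<not> \<not> p k) \<and> (t1 < n \<longrightarrow> \<not> p t1)"
    using first_idx[of 0 n "\<lambda>k. \<not> p k"] by blast
  obtain t2 where t2: "t1 \<le> t2 \<and> t2 \<le> n \<and> (\<forall>k. t1 \<le> k \<and> k < t2 \<longrightarrow> \<not> p k) \<and> (t2 < n \<longrightarrow> p t2)"
    using first_idx[of t1 n p] t1 by blast
  obtain t3 where t3: "t2 \<le> t3 \<and> t3 \<le> n \<and> (\<forall>k. t2 \<le> k \<and> k < t3 \<longrightarrow> \<not> \<not> p k) \<and> (t3 < n \<longrightarrow> \<not> p t3)"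
    using first_idx[of t2 n "\<lambda>k. \<not> p k"] t2 by blast
  have t4: "\<not> p k" if "t3 \<le> k" "k < n" for k
  proof
    assume pk: "p k"
    have "t3 \<noteq> k" using t3 pk that by auto
    then have "t3 < k" using that by auto
    have "t2 < n" "t3 < n" using \<open>t3 < k\<close> that t2 t3 by linarith+
    then have pt2: "p t2" and pt3: "\<not> p t3" using t2 t3 by blast+
    have "t1 < n" using \<open>t2 < n\<close> t2 by linarith
    then have pt1: "\<not> p t1" using t1 by blast
    have "t1 \<noteq> t2" using pt1 pt2 by blast
    then have "t1 < t2" using t2 by linarith
    have "t2 \<noteq> t3" using pt3 pt2 by blast
    then have "t2 < t3" using t3 by linarith
    show False using pat[OF \<open>t1 < t2\<close> \<open>t2 < t3\<close> \<open>t3 < k\<close> that(2) pt1 pt2 pt3 pk] .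
  qed
  define I1 where "I1 = blk vs 0 t1"
  define I2 where "I2 = blk vs t1 t2"
  define I3 where "I3 = blk vs t2 t3"
  define I4 where "I4 = blk vs t3 n"
  have inc: "increasing vs [I1, I2, I3, I4]"
    unfolding increasing_def
  proof (intro conjI allI impI ballI)
    fix P assume "P \<in> set [I1, I2, I3, I4]"
    then show "interval vs P" unfolding I1_def I2_def I3_def I4_def
      using blk_interval t1 t2 t3 n_def by auto
  next
    fix i j assume ij: "i < length [I1, I2, I3, I4]" "j < length [I1, I2, I3, I4]" "i < j"
    have sm: "interval_smaller vs (blk vs l1 r1) (blk vs l2 r2)" if "r1 \<le> l2" "r2 \<le> n" for l1 r1 l2 r2
      using blk_smaller that n_def by metis
    have "i = 0 \<and> j = 1 \<or> i = 0 \<and> j = 2 \<or> i = 0 \<and> j = 3 \<or> i = 1 \<and> j = 2 \<or> i = 1 \<and> j = 3 \<or> i = 2 \<and> j = 3"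
      using ij by auto
    then show "interval_smaller vs ([I1, I2, I3, I4] ! i) ([I1, I2, I3, I4] ! j)"
      unfolding I1_def I2_def I3_def I4_def using t1 t2 t3
      by (auto intro!: sm)
  qed
  have un: "I1 \<union> I2 \<union> I3 \<union> I4 = S"
  proof -
    have "I1 \<union> I2 \<union> I3 \<union> I4 = blk vs 0 n" unfolding I1_def I2_def I3_def I4_def
      using t1 t2 t3 blk_union by (metis le0)
    also have "\<dots> = set vs" unfolding blk_def n_def set_conv_nth by auto
    finally show ?thesis using ord by simp
  qed
  have dom: "dominates (arcs T) x (I1 \<union> I3)"
    unfolding dominates_def I1_def I3_def blk_def using t1 t3 p_def by auto
  have domd: "dominated_by (arcs T) x (I2 \<union> I4)"
    unfolding dominated_by_def I2_def I4_def blk_def using t2 t3 t4 neg by auto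
  show ?thesis using inc un dom domd by blast
qed

end
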